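(* Let $A$, $B$, $C$ be commutative $\mathbf{K}$-algebras, let $D$ and $E$ be associative $\mathbf{K}$-algebras equipped with algebra homomorphisms $\alpha\colon A\otimes B\to Z(D)$ and $\beta\colon B\otimes C\to Z(E)$ (so that $B$ acts centrally on $D$ via $b\mapsto\alpha(1\otimes b)$ and on $E$ via $b\mapsto\beta(b\otimes 1)$). Let $D\otimes_B E$ be the tensor product over $B$, which is an associative algebra. Then the fusion $D\circledast_B E$ equals $D\otimes_B E$ acting on itself by left multiplication; that is, the map $\rho\colon D\otimes_B E\to \mathrm{End}_{\mathbf{K}}(D\otimes_B E)$, $\rho(\xi)(\eta)=\xi\eta$, is an injective algebra homomorphism whose image is exactly $D\circledast_B E$.
   Context: Fusion of associative algebras: given associative $\mathbf{K}$-algebras $D$, $E$, $B$ with algebra homomorphisms $B^{\mathrm{op}}\to D$ and $B\to E$ (here $B$ is commutative, so $B^{\mathrm{op}}=B$, and the maps are the ones induced by $\alpha$ and $\beta$), the fusion $D\circledast_B E$ is the subalgebra of $\mathrm{End}_{\mathbf{K}}(D\otimes_B E)$ generated by $(D\cap (B^{\mathrm{op}})')\cup(B'\cap E)$, where $D\cap(B^{\mathrm{op}})'$ is the commutant in $D$ of the image of $B$, $B'\cap E$ is the commutant in $E$ of the image of $B$, and an element $d$ of $D$ (resp. $e$ of $E$) acts on $D\otimes_B E$ by $\delta\otimes_B\epsilon\mapsto d\delta\otimes_B\epsilon$ (resp. $\delta\otimes_B\epsilon\mapsto\delta\otimes_B e\epsilon$). *)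

theory Defs
  imports Complex_Main "HOL-Library.FuncSet"
begin

section \<open>K-algebras (the whole type is the algebra, K-structure given by a scalar action)\<close>

definition kalg :: "('k::field \<Rightarrow> 'a::ring_1 \<Rightarrow> 'a) \<Rightarrow> bool" where
  "kalg s \<longleftrightarrow> vector_space s \<and>
     (\<forall>c x y. s c (x * y) = s c x * y) \<and> (\<forall>c x y. s c (x * y) = x * s c y)"

definition alg_hom :: "('k::field \<Rightarrow> 'a::ring_1 \<Rightarrow> 'a) \<Rightarrow> ('k \<Rightarrow> 'b::ring_1 \<Rightarrow> 'b) \<Rightarrow> ('a \<Rightarrow> 'b) \<Rightarrow> bool" where
  "alg_hom s1 s2 f \<longleftrightarrow> (\<forall>x y. f (x + y) = f x + f y) \<and> (\<forall>c x. f (s1 c x) = s2 c (f x)) \<and>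
     (\<forall>x y. f (x * y) = f x * f y) \<and> f 1 = 1"

definition center :: "'a::ring_1 set" where
  "center = {z. \<forall>x. z * x = x * z}"

section \<open>Finitely supported functions (free K-vector space on D \<times> E)\<close>

definition fsupp :: "('a \<Rightarrow> 'k::zero) \<Rightarrow> 'a set" where
  "fsupp f = {p. f p \<noteq> 0}"

definition fs :: "('a \<Rightarrow> 'k::zero) set" where
  "fs = {f. finite (fsupp f)}"

definition dlt :: "'a \<Rightarrow> 'a \<Rightarrow> 'k::{zero,one}" where
  "dlt x = (\<lambda>p. if p = x then 1 else 0)"

definition fadd :: "('a \<Rightarrow> 'k::plus) \<Rightarrow> ('a \<Rightarrow> 'k) \<Rightarrow> 'a \<Rightarrow> 'k" where
  "fadd f g = (\<lambda>p. f p + g p)"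

definition fdiff :: "('a \<Rightarrow> 'k::minus) \<Rightarrow> ('a \<Rightarrow> 'k) \<Rightarrow> 'a \<Rightarrow> 'k" where
  "fdiff f g = (\<lambda>p. f p - g p)"

definition fsmul :: "'k::times \<Rightarrow> ('a \<Rightarrow> 'k) \<Rightarrow> 'a \<Rightarrow> 'k" where
  "fsmul c f = (\<lambda>p. c * f p)"

definition push :: "('a \<Rightarrow> 'b) \<Rightarrow> ('a \<Rightarrow> 'k::comm_monoid_add) \<Rightarrow> 'b \<Rightarrow> 'k" where
  "push g f = (\<lambda>x. sum f {p \<in> fsupp f. g p = x})"

text \<open>product in the free space: (d\<otimes>e)(d'\<otimes>e') = dd'\<otimes>ee', extended bilinearly\<close>
definition conv :: "('d::times \<times> 'e::times \<Rightarrow> 'k::field) \<Rightarrow> ('d \<times> 'e \<Rightarrow> 'k) \<Rightarrow> 'd \<times> 'e \<Rightarrow> 'k" where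
  "conv f g = (\<lambda>x. sum (\<lambda>(p, q). f p * g q)
      {(p, q). p \<in> fsupp f \<and> q \<in> fsupp g \<and> (fst p * fst q, snd p * snd q) = x})"

section \<open>The tensor product D \<otimes>_B E as a quotient of the free K-vector space\<close>

text \<open>Defining relations: K-bilinearity and B-balancedness, where B acts on D on the right
  via aB and on E on the left via bB.\<close>
inductive_set tens_rel ::
  "('k::field \<Rightarrow> 'd::ring_1 \<Rightarrow> 'd) \<Rightarrow> ('k \<Rightarrow> 'e::ring_1 \<Rightarrow> 'e) \<Rightarrow> ('b \<Rightarrow> 'd) \<Rightarrow> ('b \<Rightarrow> 'e)
    \<Rightarrow> ('d \<times> 'e \<Rightarrow> 'k) set"
  for sD sE aB bB where
  ladd: "fdiff (dlt (d + d', e)) (fadd (dlt (d, e)) (dlt (d', e))) \<in> tens_rel sD sE aB bB"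
| radd: "fdiff (dlt (d, e + e')) (fadd (dlt (d, e)) (dlt (d, e'))) \<in> tens_rel sD sE aB bB"
| lsc: "fdiff (dlt (sD c d, e)) (fsmul c (dlt (d, e))) \<in> tens_rel sD sE aB bB"
| rsc: "fdiff (dlt (d, sE c e)) (fsmul c (dlt (d, e))) \<in> tens_rel sD sE aB bB"
| bal: "fdiff (dlt (d * aB b, e)) (dlt (d, bB b * e)) \<in> tens_rel sD sE aB bB"

inductive_set tens_null ::
  "('k::field \<Rightarrow> 'd::ring_1 \<Rightarrow> 'd) \<Rightarrow> ('k \<Rightarrow> 'e::ring_1 \<Rightarrow> 'e) \<Rightarrow> ('b \<Rightarrow> 'd) \<Rightarrow> ('b \<Rightarrow> 'e)
    \<Rightarrow> ('d \<times> 'e \<Rightarrow> 'k) set"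
  for sD sE aB bB where
  zero: "(\<lambda>_. 0) \<in> tens_null sD sE aB bB"
| step: "r \<in> tens_rel sD sE aB bB \<Longrightarrow> f \<in> tens_null sD sE aB bB
          \<Longrightarrow> fadd (fsmul c r) f \<in> tens_null sD sE aB bB"

definition tcls :: "('a \<Rightarrow> 'k::field) set \<Rightarrow> ('a \<Rightarrow> 'k) \<Rightarrow> ('a \<Rightarrow> 'k) set" where
  "tcls N f = {g \<in> fs. fdiff g f \<in> N}"

definition tcarrier :: "('a \<Rightarrow> 'k::field) set \<Rightarrow> ('a \<Rightarrow> 'k) set set" where
  "tcarrier N = tcls N ` fs"

definition rep :: "'a set \<Rightarrow> 'a" where
  "rep X = (SOME f. f \<in> X)"

definition tadd :: "('a \<Rightarrow> 'k::field) set \<Rightarrow> ('a \<Rightarrow> 'k) set \<Rightarrow> ('a \<Rightarrow> 'k) set \<Rightarrow> ('a \<Rightarrow> 'k) set" where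
  "tadd N X Y = tcls N (fadd (rep X) (rep Y))"

definition tsc :: "('a \<Rightarrow> 'k::field) set \<Rightarrow> 'k \<Rightarrow> ('a \<Rightarrow> 'k) set \<Rightarrow> ('a \<Rightarrow> 'k) set" where
  "tsc N c X = tcls N (fsmul c (rep X))"

definition tmul :: "('d::times \<times> 'e::times \<Rightarrow> 'k::field) set \<Rightarrow> ('d \<times> 'e \<Rightarrow> 'k) set
    \<Rightarrow> ('d \<times> 'e \<Rightarrow> 'k) set \<Rightarrow> ('d \<times> 'e \<Rightarrow> 'k) set" where
  "tmul N X Y = tcls N (conv (rep X) (rep Y))"

definition tone :: "('d::one \<times> 'e::one \<Rightarrow> 'k::field) set \<Rightarrow> ('d \<times> 'e \<Rightarrow> 'k) set" where
  "tone N = tcls N (dlt (1, 1))"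

definition lin_end :: "('a \<Rightarrow> 'k::field) set \<Rightarrow> (('a \<Rightarrow> 'k) set \<Rightarrow> ('a \<Rightarrow> 'k) set) set" where
  "lin_end N = {\<phi> \<in> tcarrier N \<rightarrow>\<^sub>E tcarrier N.
      (\<forall>X\<in>tcarrier N. \<forall>Y\<in>tcarrier N. \<phi> (tadd N X Y) = tadd N (\<phi> X) (\<phi> Y)) \<and>
      (\<forall>c. \<forall>X\<in>tcarrier N. \<phi> (tsc N c X) = tsc N c (\<phi> X))}"

definition actL :: "('d::times \<times> 'e \<Rightarrow> 'k::field) set \<Rightarrow> 'd \<Rightarrow> ('d \<times> 'e \<Rightarrow> 'k) set \<Rightarrow> ('d \<times> 'e \<Rightarrow> 'k) set" where
  "actL N d = (\<lambda>X\<in>tcarrier N. tcls N (push (\<lambda>(x, y). (d * x, y)) (rep X)))"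

definition actR :: "('d \<times> 'e::times \<Rightarrow> 'k::field) set \<Rightarrow> 'e \<Rightarrow> ('d \<times> 'e \<Rightarrow> 'k) set \<Rightarrow> ('d \<times> 'e \<Rightarrow> 'k) set" where
  "actR N e = (\<lambda>X\<in>tcarrier N. tcls N (push (\<lambda>(x, y). (x, e * y)) (rep X)))"

inductive_set gen_subalg :: "('a \<Rightarrow> 'k::field) set \<Rightarrow> (('a \<Rightarrow> 'k) set \<Rightarrow> ('a \<Rightarrow> 'k) set) set
    \<Rightarrow> (('a \<Rightarrow> 'k) set \<Rightarrow> ('a \<Rightarrow> 'k) set) set"
  for N S where
  base: "\<phi> \<in> S \<Longrightarrow> \<phi> \<in> gen_subalg N S"
| one: "(\<lambda>X\<in>tcarrier N. X) \<in> gen_subalg N S"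
| add: "\<phi> \<in> gen_subalg N S \<Longrightarrow> \<psi> \<in> gen_subalg N S
          \<Longrightarrow> (\<lambda>X\<in>tcarrier N. tadd N (\<phi> X) (\<psi> X)) \<in> gen_subalg N S"
| scale: "\<phi> \<in> gen_subalg N S \<Longrightarrow> (\<lambda>X\<in>tcarrier N. tsc N c (\<phi> X)) \<in> gen_subalg N S"
| mult: "\<phi> \<in> gen_subalg N S \<Longrightarrow> \<psi> \<in> gen_subalg N S
          \<Longrightarrow> compose (tcarrier N) \<phi> \<psi> \<in> gen_subalg N S"

text \<open>Fusion D \<circledast>_B E: generated by (D \<inter> (B^op)') \<union> (B' \<inter> E).\<close>
definition fusion ::
  "('k::field \<Rightarrow> 'd::ring_1 \<Rightarrow> 'd) \<Rightarrow> ('k \<Rightarrow> 'e::ring_1 \<Rightarrow> 'e) \<Rightarrow> ('b \<Rightarrow> 'd) \<Rightarrow> ('b \<Rightarrow> 'e)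
    \<Rightarrow> (('d \<times> 'e \<Rightarrow> 'k) set \<Rightarrow> ('d \<times> 'e \<Rightarrow> 'k) set) set" where
  "fusion sD sE aB bB =
     (let N = tens_null sD sE aB bB in
      gen_subalg N (actL N ` {d. \<forall>b. d * aB b = aB b * d} \<union> actR N ` {e. \<forall>b. bB b * e = e * bB b}))"

definition lmul :: "('d::times \<times> 'e::times \<Rightarrow> 'k::field) set \<Rightarrow> ('d \<times> 'e \<Rightarrow> 'k) set
    \<Rightarrow> ('d \<times> 'e \<Rightarrow> 'k) set \<Rightarrow> ('d \<times> 'e \<Rightarrow> 'k) set" where
  "lmul N \<xi> = (\<lambda>\<eta>\<in>tcarrier N. tmul N \<xi> \<eta>)"

end

theory Submission
  imports Defs
begin


lemma fs_iff: "f \<in> fs \<longleftrightarrow> finite {p. f p \<noteq> 0}"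
  by (simp add: fs_def fsupp_def)

lemma fs_zero[simp]: "(\<lambda>_. 0) \<in> fs" by (simp add: fs_iff)

lemma fs_dlt[simp]: "(dlt a :: _ \<Rightarrow> 'k::{zero,one}) \<in> fs"
proof -
  have "{p. dlt a p \<noteq> (0::'k)} \<subseteq> {a}" by (auto simp: dlt_def)
  then show ?thesis by (simp add: fs_iff finite_subset)
qed

lemma fs_fadd[simp]: "f \<in> fs \<Longrightarrow> g \<in> fs \<Longrightarrow> fadd f (g :: _ \<Rightarrow> 'k::monoid_add) \<in> fs"
proof -
  assume "f \<in> fs" "g \<in> fs"
  moreover have "{p. fadd f g p \<noteq> 0} \<subseteq> {p. f p \<noteq> 0} \<union> {p. g p \<noteq> 0}" by (auto simp: fadd_def)
  ultimately show ?thesis by (auto simp: fs_iff intro: finite_subset)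
qed

lemma fs_fdiff[simp]: "f \<in> fs \<Longrightarrow> g \<in> fs \<Longrightarrow> fdiff f (g :: _ \<Rightarrow> 'k::group_add) \<in> fs"
proof -
  assume "f \<in> fs" "g \<in> fs"
  moreover have "{p. fdiff f g p \<noteq> 0} \<subseteq> {p. f p \<noteq> 0} \<union> {p. g p \<noteq> 0}" by (auto simp: fdiff_def)
  ultimately show ?thesis by (auto simp: fs_iff intro: finite_subset)
qed

lemma fs_fsmul[simp]: "f \<in> fs \<Longrightarrow> fsmul c (f :: _ \<Rightarrow> 'k::mult_zero) \<in> fs"
proof -
  assume "f \<in> fs"
  moreover have "{p. fsmul c f p \<noteq> 0} \<subseteq> {p. f p \<noteq> 0}" by (auto simp: fsmul_def)
  ultimately show ?thesis by (auto simp: fs_iff intro: finite_subset)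
qed

lemma fs_induct[consumes 1, case_names zero step]:
  fixes g :: "'a \<Rightarrow> 'k::field"
  assumes "g \<in> fs" "P (\<lambda>_. 0)"
    "\<And>f a c. f \<in> fs \<Longrightarrow> P f \<Longrightarrow> P (fadd f (fsmul c (dlt a)))"
  shows "P g"
proof -
  have "\<And>g. fsupp g \<subseteq> S \<Longrightarrow> P g" if "finite S" for S
    using that
  proof (induction S)
    case empty
    then have "g = (\<lambda>_. 0)" by (auto simp: fsupp_def)
    then show ?case using assms(2) by simp
  next
    case (insert a S)
    define g' where "g' = (\<lambda>p. if p = a then 0 else g p)"
    have "fsupp g' \<subseteq> S" using insert.prems by (auto simp: fsupp_def g'_def)
    then have Pg': "P g'" using insert.IH by blast
    have fin: "finite (fsupp g)" using insert.prems insert.hyps(1) finite_subset by blast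
    have "fsupp g' \<subseteq> fsupp g" by (auto simp: fsupp_def g'_def)
    then have "g' \<in> fs" using fin by (auto simp: fs_def intro: finite_subset)
    moreover have "g = fadd g' (fsmul (g a) (dlt a))"
      by (auto simp: fadd_def fsmul_def dlt_def g'_def)
    ultimately show ?case using Pg' assms(3) by metis
  qed
  then show ?thesis using assms(1) by (auto simp: fs_def)
qed



abbreviation pm :: "'d::times \<times> 'e::times \<Rightarrow> 'd \<times> 'e \<Rightarrow> 'd \<times> 'e" where
  "pm p q \<equiv> (fst p * fst q, snd p * snd q)"

lemma conv_eq:
  fixes f g :: "'d::times \<times> 'e::times \<Rightarrow> 'k::field"
  assumes "finite A" "finite B" "fsupp f \<subseteq> A" "fsupp g \<subseteq> B"
  shows "conv f g x = (\<Sum>p\<in>A. \<Sum>q\<in>B. if pm p q = x then f p * g q else 0)"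
proof -
  have fA: "finite (fsupp f)" "finite (fsupp g)" using assms finite_subset by auto
  have "{(p, q). p \<in> fsupp f \<and> q \<in> fsupp g \<and> pm p q = x} =
      {z \<in> fsupp f \<times> fsupp g. pm (fst z) (snd z) = x}" by auto
  then have "conv f g x = (\<Sum>z\<in>fsupp f \<times> fsupp g. if pm (fst z) (snd z) = x then f (fst z) * g (snd z) else 0)"
    unfolding conv_def using fA by (simp add: sum.inter_filter case_prod_beta)
  also have "\<dots> = (\<Sum>z\<in>A \<times> B. if pm (fst z) (snd z) = x then f (fst z) * g (snd z) else 0)"
    apply (rule sum.mono_neutral_left)
    using assms by (auto simp: fsupp_def)
  also have "\<dots> = (\<Sum>p\<in>A. \<Sum>q\<in>B. if pm p q = x then f p * g q else 0)"
    by (simp add: sum.cartesian_product case_prod_beta)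
  finally show ?thesis .
qed

lemma fsupp_fs: "f \<in> fs \<Longrightarrow> finite (fsupp f)" by (simp add: fs_def)

lemma conv_fs:
  fixes f g :: "'d::times \<times> 'e::times \<Rightarrow> 'k::field"
  assumes "f \<in> fs" "g \<in> fs"
  shows "conv f g \<in> fs"
proof -
  let ?M = "(\<lambda>(p,q). pm p q) ` (fsupp f \<times> fsupp g)"
  have "fsupp (conv f g) \<subseteq> ?M"
  proof
    fix x assume "x \<in> fsupp (conv f g)"
    then have "conv f g x \<noteq> 0" by (simp add: fsupp_def)
    then have "{(p, q). p \<in> fsupp f \<and> q \<in> fsupp g \<and> pm p q = x} \<noteq> {}"
      unfolding conv_def by (metis sum.empty)
    then obtain p q where "p \<in> fsupp f" "q \<in> fsupp g" "pm p q = x"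
      by blast
    then show "x \<in> ?M" by (auto intro!: image_eqI[where x="(p,q)"])
  qed
  moreover have "finite ?M" using assms by (simp add: fs_def)
  ultimately show ?thesis by (simp add: fs_def finite_subset)
qed

lemma conv_fadd_left:
  fixes f g h :: "'d::times \<times> 'e::times \<Rightarrow> 'k::field"
  assumes "f \<in> fs" "g \<in> fs" "h \<in> fs"
  shows "conv (fadd f g) h = fadd (conv f h) (conv g h)"
proof
  fix x
  let ?A = "fsupp f \<union> fsupp g"
  have fin: "finite ?A" "finite (fsupp h)" using assms by (auto simp: fs_def)
  have s: "fsupp (fadd f g) \<subseteq> ?A" by (auto simp: fsupp_def fadd_def)
  have e1: "conv (fadd f g) h x = (\<Sum>p\<in>?A. \<Sum>q\<in>fsupp h. if pm p q = x then (fadd f g) p * h q else 0)" by (rule conv_eq) (use fin s in auto)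
  have e2: "conv f h x = (\<Sum>p\<in>?A. \<Sum>q\<in>fsupp h. if pm p q = x then (f) p * h q else 0)" by (rule conv_eq) (use fin in \<open>auto simp: fsupp_def\<close>)
  have e3: "conv g h x = (\<Sum>p\<in>?A. \<Sum>q\<in>fsupp h. if pm p q = x then (g) p * h q else 0)" by (rule conv_eq) (use fin in \<open>auto simp: fsupp_def\<close>)
  show "conv (fadd f g) h x = fadd (conv f h) (conv g h) x"
    apply (simp only: fadd_def[of "conv f h" "conv g h"] e1 e2 e3)
    apply (simp only: sum.distrib[symmetric])
    apply (rule sum.cong, rule refl)+
    by (simp add: fadd_def distrib_right)
qed

lemma conv_fadd_right:
  fixes f g h :: "'d::times \<times> 'e::times \<Rightarrow> 'k::field"
  assumes "f \<in> fs" "g \<in> fs" "h \<in> fs"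
  shows "conv h (fadd f g) = fadd (conv h f) (conv h g)"
proof
  fix x
  let ?A = "fsupp f \<union> fsupp g"
  have fin: "finite ?A" "finite (fsupp h)" using assms by (auto simp: fs_def)
  have s: "fsupp (fadd f g) \<subseteq> ?A" by (auto simp: fsupp_def fadd_def)
  have e1: "conv h (fadd f g) x = (\<Sum>q\<in>fsupp h. \<Sum>p\<in>?A. if pm q p = x then h q * (fadd f g) p else 0)" by (rule conv_eq) (use fin s in auto)
  have e2: "conv h f x = (\<Sum>q\<in>fsupp h. \<Sum>p\<in>?A. if pm q p = x then h q * (f) p else 0)" by (rule conv_eq) (use fin in \<open>auto simp: fsupp_def\<close>)
  have e3: "conv h g x = (\<Sum>q\<in>fsupp h. \<Sum>p\<in>?A. if pm q p = x then h q * (g) p else 0)" by (rule conv_eq) (use fin in \<open>auto simp: fsupp_def\<close>)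
  show "conv h (fadd f g) x = fadd (conv h f) (conv h g) x"
    apply (simp only: fadd_def[of "conv h f" "conv h g"] e1 e2 e3)
    apply (simp only: sum.distrib[symmetric])
    apply (rule sum.cong, rule refl)+
    by (simp add: fadd_def distrib_left)
qed

lemma conv_fdiff_left:
  fixes f g h :: "'d::times \<times> 'e::times \<Rightarrow> 'k::field"
  assumes "f \<in> fs" "g \<in> fs" "h \<in> fs"
  shows "conv (fdiff f g) h = fdiff (conv f h) (conv g h)"
proof
  fix x
  let ?A = "fsupp f \<union> fsupp g"
  have fin: "finite ?A" "finite (fsupp h)" using assms by (auto simp: fs_def)
  have s: "fsupp (fdiff f g) \<subseteq> ?A" by (auto simp: fsupp_def fdiff_def)
  have e1: "conv (fdiff f g) h x = (\<Sum>p\<in>?A. \<Sum>q\<in>fsupp h. if pm p q = x then (fdiff f g) p * h q else 0)" by (rule conv_eq) (use fin s in auto)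
  have e2: "conv f h x = (\<Sum>p\<in>?A. \<Sum>q\<in>fsupp h. if pm p q = x then (f) p * h q else 0)" by (rule conv_eq) (use fin in \<open>auto simp: fsupp_def\<close>)
  have e3: "conv g h x = (\<Sum>p\<in>?A. \<Sum>q\<in>fsupp h. if pm p q = x then (g) p * h q else 0)" by (rule conv_eq) (use fin in \<open>auto simp: fsupp_def\<close>)
  show "conv (fdiff f g) h x = fdiff (conv f h) (conv g h) x"
    apply (simp only: fdiff_def[of "conv f h" "conv g h"] e1 e2 e3)
    apply (simp only: sum_subtractf[symmetric])
    apply (rule sum.cong, rule refl)+
    by (simp add: fdiff_def left_diff_distrib)
qed

lemma conv_fdiff_right:
  fixes f g h :: "'d::times \<times> 'e::times \<Rightarrow> 'k::field"
  assumes "f \<in> fs" "g \<in> fs" "h \<in> fs"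
  shows "conv h (fdiff f g) = fdiff (conv h f) (conv h g)"
proof
  fix x
  let ?A = "fsupp f \<union> fsupp g"
  have fin: "finite ?A" "finite (fsupp h)" using assms by (auto simp: fs_def)
  have s: "fsupp (fdiff f g) \<subseteq> ?A" by (auto simp: fsupp_def fdiff_def)
  have e1: "conv h (fdiff f g) x = (\<Sum>q\<in>fsupp h. \<Sum>p\<in>?A. if pm q p = x then h q * (fdiff f g) p else 0)" by (rule conv_eq) (use fin s in auto)
  have e2: "conv h f x = (\<Sum>q\<in>fsupp h. \<Sum>p\<in>?A. if pm q p = x then h q * (f) p else 0)" by (rule conv_eq) (use fin in \<open>auto simp: fsupp_def\<close>)
  have e3: "conv h g x = (\<Sum>q\<in>fsupp h. \<Sum>p\<in>?A. if pm q p = x then h q * (g) p else 0)" by (rule conv_eq) (use fin in \<open>auto simp: fsupp_def\<close>)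
  show "conv h (fdiff f g) x = fdiff (conv h f) (conv h g) x"
    apply (simp only: fdiff_def[of "conv h f" "conv h g"] e1 e2 e3)
    apply (simp only: sum_subtractf[symmetric])
    apply (rule sum.cong, rule refl)+
    by (simp add: fdiff_def right_diff_distrib)
qed

lemma conv_fsmul_left:
  fixes f h :: "'d::times \<times> 'e::times \<Rightarrow> 'k::field"
  assumes "f \<in> fs" "h \<in> fs"
  shows "conv (fsmul c f) h = fsmul c (conv f h)"
proof
  fix x
  have fin: "finite (fsupp f)" "finite (fsupp h)" using assms by (auto simp: fs_def)
  have s: "fsupp (fsmul c f) \<subseteq> fsupp f" by (auto simp: fsupp_def fsmul_def)
  have e1: "conv (fsmul c f) h x = (\<Sum>p\<in>fsupp f. \<Sum>q\<in>fsupp h. if pm p q = x then fsmul c f p * h q else 0)" by (rule conv_eq) (use fin s in auto)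
  have e2: "conv f h x = (\<Sum>p\<in>fsupp f. \<Sum>q\<in>fsupp h. if pm p q = x then f p * h q else 0)" by (rule conv_eq) (use fin in auto)
  show "conv (fsmul c f) h x = fsmul c (conv f h) x"
    apply (simp only: fsmul_def[of c "conv f h"] e1 e2)
    apply (simp only: sum_distrib_left)
    apply (rule sum.cong, rule refl)+
    by (simp add: fsmul_def)
qed

lemma conv_fsmul_right:
  fixes f h :: "'d::times \<times> 'e::times \<Rightarrow> 'k::field"
  assumes "f \<in> fs" "h \<in> fs"
  shows "conv h (fsmul c f) = fsmul c (conv h f)"
proof
  fix x
  have fin: "finite (fsupp f)" "finite (fsupp h)" using assms by (auto simp: fs_def)
  have s: "fsupp (fsmul c f) \<subseteq> fsupp f" by (auto simp: fsupp_def fsmul_def)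
  have e1: "conv h (fsmul c f) x = (\<Sum>q\<in>fsupp h. \<Sum>p\<in>fsupp f. if pm q p = x then h q * fsmul c f p else 0)" by (rule conv_eq) (use fin s in auto)
  have e2: "conv h f x = (\<Sum>q\<in>fsupp h. \<Sum>p\<in>fsupp f. if pm q p = x then h q * f p else 0)" by (rule conv_eq) (use fin in auto)
  show "conv h (fsmul c f) x = fsmul c (conv h f) x"
    apply (simp only: fsmul_def[of c "conv h f"] e1 e2)
    apply (simp only: sum_distrib_left)
    apply (rule sum.cong, rule refl)+
    by (simp add: fsmul_def)
qed

lemma conv_zero_left: "conv (\<lambda>_. 0) g = (\<lambda>_. 0)"
  by (simp add: conv_def fsupp_def)

lemma conv_zero_right: "conv g (\<lambda>_. 0) = (\<lambda>_. 0)"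
  by (simp add: conv_def fsupp_def)

lemma fsupp_dlt: "fsupp (dlt p :: _ \<Rightarrow> 'k::zero_neq_one) = {p}"
  by (auto simp: fsupp_def dlt_def)

lemma conv_dlt_dlt:
  "conv (dlt p) (dlt q) = (dlt (pm p q) :: 'd::times \<times> 'e::times \<Rightarrow> 'k::field)"
proof
  fix x
  show "conv (dlt p) (dlt q) x = (dlt (pm p q) :: 'd \<times> 'e \<Rightarrow> 'k) x"
    apply (subst conv_eq[of "{p}" "{q}"])
    by (auto simp: fsupp_def dlt_def)
qed

lemma conv_unit_left:
  fixes g :: "'d::monoid_mult \<times> 'e::monoid_mult \<Rightarrow> 'k::field"
  assumes "g \<in> fs"
  shows "conv (dlt (1,1)) g = g"
proof
  fix x
  have fin: "finite (fsupp g)" using assms by (simp add: fs_def)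
  have "conv (dlt (1,1)) g x = (\<Sum>q\<in>fsupp g. if q = x then g q else 0)"
    apply (subst conv_eq[of "{(1,1)}" "fsupp g"])
    using fin by (auto simp: fsupp_def dlt_def)
  also have "\<dots> = g x" using fin by (simp add: fsupp_def)
  finally show "conv (dlt (1,1)) g x = g x" .
qed

lemma conv_unit_right:
  fixes g :: "'d::monoid_mult \<times> 'e::monoid_mult \<Rightarrow> 'k::field"
  assumes "g \<in> fs"
  shows "conv g (dlt (1,1)) = g"
proof
  fix x
  have fin: "finite (fsupp g)" using assms by (simp add: fs_def)
  have "conv g (dlt (1,1)) x = (\<Sum>q\<in>fsupp g. if q = x then g q else 0)"
    apply (subst conv_eq[of "fsupp g" "{(1,1)}"])
    using fin by (auto simp: fsupp_def dlt_def)
  also have "\<dots> = g x" using fin by (simp add: fsupp_def)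
  finally show "conv g (dlt (1,1)) x = g x" .
qed



declare conv_fs[simp]

lemmas conv_lin = conv_fadd_left conv_fadd_right conv_fsmul_left conv_fsmul_right
  conv_zero_left conv_zero_right conv_dlt_dlt

lemma conv_assoc1:
  fixes h :: "'d::semigroup_mult \<times> 'e::semigroup_mult \<Rightarrow> 'k::field"
  assumes "h \<in> fs"
  shows "conv (conv (dlt a) (dlt b)) h = conv (dlt a) (conv (dlt b) h)"
  using assms
proof (induction rule: fs_induct)
  case zero then show ?case by (simp add: conv_lin)
next
  case (step f e c)
  then show ?case by (simp add: conv_lin mult.assoc)
qed

lemma conv_assoc2:
  fixes g h :: "'d::semigroup_mult \<times> 'e::semigroup_mult \<Rightarrow> 'k::field"
  assumes "g \<in> fs" "h \<in> fs"
  shows "conv (conv (dlt a) g) h = conv (dlt a) (conv g h)"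
  using assms(1)
proof (induction rule: fs_induct)
  case zero then show ?case by (simp add: conv_lin)
next
  case (step f e c)
  then show ?case using assms(2) by (simp add: conv_lin conv_assoc1 del: conv_dlt_dlt)
qed

lemma conv_assoc:
  fixes f g h :: "'d::semigroup_mult \<times> 'e::semigroup_mult \<Rightarrow> 'k::field"
  assumes "f \<in> fs" "g \<in> fs" "h \<in> fs"
  shows "conv (conv f g) h = conv f (conv g h)"
  using assms(1)
proof (induction rule: fs_induct)
  case zero then show ?case by (simp add: conv_lin)
next
  case (step f e c)
  then show ?case using assms(2,3) by (simp add: conv_lin conv_assoc2 del: conv_dlt_dlt)
qed



lemma rel_fs: "r \<in> tens_rel sD sE aB bB \<Longrightarrow> r \<in> fs"
  by (induct rule: tens_rel.induct) auto

lemma null_fs: "n \<in> tens_null sD sE aB bB \<Longrightarrow> n \<in> fs"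
  by (induct rule: tens_null.induct) (auto simp: rel_fs)

lemma null_add: "n \<in> tens_null sD sE aB bB \<Longrightarrow> m \<in> tens_null sD sE aB bB
   \<Longrightarrow> fadd n m \<in> tens_null sD sE aB bB"
proof (induct rule: tens_null.induct)
  case zero then show ?case by (simp add: fadd_def)
next
  case (step r f c)
  have "fadd (fadd (fsmul c r) f) m = fadd (fsmul c r) (fadd f m)"
    by (simp add: fadd_def add.assoc)
  then show ?case using step by (simp add: tens_null.step)
qed

lemma null_smul: "n \<in> tens_null sD sE aB bB \<Longrightarrow> fsmul a n \<in> tens_null sD sE aB bB"
proof (induct rule: tens_null.induct)
  case zero
  show ?case by (simp add: fsmul_def tens_null.zero)
next
  case (step r f c)
  have "fsmul a (fadd (fsmul c r) f) = fadd (fsmul (a * c) r) (fsmul a f)"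
    by (simp add: fadd_def fsmul_def distrib_left mult.assoc)
  then show ?case using step by (simp add: tens_null.step)
qed

lemma null_diff: "n \<in> tens_null sD sE aB bB \<Longrightarrow> m \<in> tens_null sD sE aB bB
   \<Longrightarrow> fdiff n m \<in> tens_null sD sE aB bB"
proof -
  assume a: "n \<in> tens_null sD sE aB bB" "m \<in> tens_null sD sE aB bB"
  have "fdiff n m = fadd n (fsmul (-1) m)" by (simp add: fadd_def fsmul_def fdiff_def)
  then show ?thesis using a by (simp add: null_add null_smul)
qed

lemma rel_null: "r \<in> tens_rel sD sE aB bB \<Longrightarrow> r \<in> tens_null sD sE aB bB"
proof -
  assume "r \<in> tens_rel sD sE aB bB"
  then have "fadd (fsmul 1 r) (\<lambda>_. 0) \<in> tens_null sD sE aB bB"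
    by (rule tens_null.step) (rule tens_null.zero)
  moreover have "fadd (fsmul 1 r) (\<lambda>_. 0) = r" by (simp add: fadd_def fsmul_def)
  ultimately show ?thesis by simp
qed

lemma null_zero: "(\<lambda>_. 0) \<in> tens_null sD sE aB bB" by (rule tens_null.zero)

locale tq =
  fixes sD :: "'k::field \<Rightarrow> 'd::ring_1 \<Rightarrow> 'd" and sE :: "'k \<Rightarrow> 'e::ring_1 \<Rightarrow> 'e"
    and aB :: "'b \<Rightarrow> 'd" and bB :: "'b \<Rightarrow> 'e"
  assumes kD: "kalg sD" and kE: "kalg sE"
    and cA: "range aB \<subseteq> center" and cB: "range bB \<subseteq> center"
begin

lemma sD1: "sD c (x * y) = sD c x * y" using kD unfolding kalg_def by blast
lemma sD2: "sD c (x * y) = x * sD c y" using kD unfolding kalg_def by blast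
lemma sE1: "sE c (x * y) = sE c x * y" using kE unfolding kalg_def by blast
lemma sE2: "sE c (x * y) = x * sE c y" using kE unfolding kalg_def by blast
lemma cAc: "aB b * x = x * aB b" using cA by (auto simp: center_def)
lemma cBc: "bB b * x = x * bB b" using cB by (auto simp: center_def)

lemma rel_conv_right:
  assumes "r \<in> tens_rel sD sE aB bB"
  shows "conv r (dlt (a1, a2)) \<in> tens_rel sD sE aB bB"
  using assms
proof cases
  case (ladd d d' e)
  then have "conv r (dlt (a1, a2)) = fdiff (dlt (d * a1 + d' * a1, e * a2)) (fadd (dlt (d * a1, e * a2)) (dlt (d' * a1, e * a2)))"
    by (simp add: conv_lin conv_fdiff_left distrib_right)
  then show ?thesis by (simp only:) (rule tens_rel.ladd)
next
  case (radd d e e')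
  then have "conv r (dlt (a1, a2)) = fdiff (dlt (d * a1, e * a2 + e' * a2)) (fadd (dlt (d * a1, e * a2)) (dlt (d * a1, e' * a2)))"
    by (simp add: conv_lin conv_fdiff_left distrib_right)
  then show ?thesis by (simp only:) (rule tens_rel.radd)
next
  case (lsc c d e)
  then have "conv r (dlt (a1, a2)) = fdiff (dlt (sD c (d * a1), e * a2)) (fsmul c (dlt (d * a1, e * a2)))"
    by (simp add: conv_lin conv_fdiff_left sD1)
  then show ?thesis by (simp only:) (rule tens_rel.lsc)
next
  case (rsc d c e)
  then have "conv r (dlt (a1, a2)) = fdiff (dlt (d * a1, sE c (e * a2))) (fsmul c (dlt (d * a1, e * a2)))"
    by (simp add: conv_lin conv_fdiff_left sE1)
  then show ?thesis by (simp only:) (rule tens_rel.rsc)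
next
  case (bal d b e)
  have "d * aB b * a1 = d * a1 * aB b" by (simp add: mult.assoc cAc)
  with bal have "conv r (dlt (a1, a2)) = fdiff (dlt (d * a1 * aB b, e * a2)) (dlt (d * a1, bB b * (e * a2)))"
    by (simp add: conv_lin conv_fdiff_left mult.assoc)
  then show ?thesis by (simp only:) (rule tens_rel.bal)
qed

lemma rel_conv_left:
  assumes "r \<in> tens_rel sD sE aB bB"
  shows "conv (dlt (a1, a2)) r \<in> tens_rel sD sE aB bB"
  using assms
proof cases
  case (ladd d d' e)
  then have "conv (dlt (a1, a2)) r = fdiff (dlt (a1 * d + a1 * d', a2 * e)) (fadd (dlt (a1 * d, a2 * e)) (dlt (a1 * d', a2 * e)))"
    by (simp add: conv_lin conv_fdiff_right distrib_left)
  then show ?thesis by (simp only:) (rule tens_rel.ladd)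
next
  case (radd d e e')
  then have "conv (dlt (a1, a2)) r = fdiff (dlt (a1 * d, a2 * e + a2 * e')) (fadd (dlt (a1 * d, a2 * e)) (dlt (a1 * d, a2 * e')))"
    by (simp add: conv_lin conv_fdiff_right distrib_left)
  then show ?thesis by (simp only:) (rule tens_rel.radd)
next
  case (lsc c d e)
  then have "conv (dlt (a1, a2)) r = fdiff (dlt (sD c (a1 * d), a2 * e)) (fsmul c (dlt (a1 * d, a2 * e)))"
    by (simp add: conv_lin conv_fdiff_right sD2)
  then show ?thesis by (simp only:) (rule tens_rel.lsc)
next
  case (rsc d c e)
  then have "conv (dlt (a1, a2)) r = fdiff (dlt (a1 * d, sE c (a2 * e))) (fsmul c (dlt (a1 * d, a2 * e)))"
    by (simp add: conv_lin conv_fdiff_right sE2)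
  then show ?thesis by (simp only:) (rule tens_rel.rsc)
next
  case (bal d b e)
  have "a2 * (bB b * e) = bB b * (a2 * e)" by (metis mult.assoc cBc)
  with bal have "conv (dlt (a1, a2)) r = fdiff (dlt (a1 * d * aB b, a2 * e)) (dlt (a1 * d, bB b * (a2 * e)))"
    by (simp add: conv_lin conv_fdiff_right mult.assoc)
  then show ?thesis by (simp only:) (rule tens_rel.bal)
qed

lemma rel_conv_right_fs:
  assumes "r \<in> tens_rel sD sE aB bB" "g \<in> fs"
  shows "conv r g \<in> tens_null sD sE aB bB"
  using assms(2)
proof (induction rule: fs_induct)
  case zero then show ?case by (simp add: conv_lin null_zero)
next
  case (step f a c)
  obtain a1 a2 where a: "a = (a1, a2)" by force
  have "conv r (fadd f (fsmul c (dlt a))) = fadd (conv r f) (fsmul c (conv r (dlt a)))"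
    using step rel_fs[OF assms(1)] by (simp add: conv_lin)
  then show ?case using step rel_conv_right[OF assms(1)] a
    by (simp add: null_add null_smul rel_null)
qed

lemma rel_conv_left_fs:
  assumes "r \<in> tens_rel sD sE aB bB" "g \<in> fs"
  shows "conv g r \<in> tens_null sD sE aB bB"
  using assms(2)
proof (induction rule: fs_induct)
  case zero then show ?case by (simp add: conv_lin null_zero)
next
  case (step f a c)
  obtain a1 a2 where a: "a = (a1, a2)" by force
  have "conv (fadd f (fsmul c (dlt a))) r = fadd (conv f r) (fsmul c (conv (dlt a) r))"
    using step rel_fs[OF assms(1)] by (simp add: conv_lin)
  then show ?case using step rel_conv_left[OF assms(1)] a
    by (simp add: null_add null_smul rel_null)
qed

lemma null_conv_right:
  assumes "n \<in> tens_null sD sE aB bB" "g \<in> fs"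
  shows "conv n g \<in> tens_null sD sE aB bB"
  using assms(1)
proof (induct rule: tens_null.induct)
  case zero then show ?case by (simp add: conv_lin null_zero)
next
  case (step r f c)
  have "conv (fadd (fsmul c r) f) g = fadd (fsmul c (conv r g)) (conv f g)"
    using step assms(2) rel_fs[OF step(1)] null_fs[OF step(2)] by (simp add: conv_lin)
  then show ?case using step rel_conv_right_fs assms(2) by (simp add: null_add null_smul)
qed

lemma null_conv_left:
  assumes "n \<in> tens_null sD sE aB bB" "g \<in> fs"
  shows "conv g n \<in> tens_null sD sE aB bB"
  using assms(1)
proof (induct rule: tens_null.induct)
  case zero then show ?case by (simp add: conv_lin null_zero)
next
  case (step r f c)
  have "conv g (fadd (fsmul c r) f) = fadd (fsmul c (conv g r)) (conv g f)"
    using step assms(2) rel_fs[OF step(1)] null_fs[OF step(2)] by (simp add: conv_lin)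
  then show ?case using step rel_conv_left_fs assms(2) by (simp add: null_add null_smul)
qed

end


context tq begin

lemma dlt_apply: "dlt x p = (if p = x then 1 else 0)" by (simp add: dlt_def)

abbreviation "NN \<equiv> tens_null sD sE aB bB"
abbreviation "TT \<equiv> tcarrier NN"
abbreviation "cl \<equiv> tcls NN"

lemma cl_self: "f \<in> fs \<Longrightarrow> f \<in> cl f"
proof -
  assume "f \<in> fs"
  moreover have "fdiff f f = (\<lambda>_. 0)" by (simp add: fdiff_def)
  ultimately show ?thesis by (simp add: tcls_def null_zero)
qed

lemma cl_eq:
  assumes "f \<in> fs" "g \<in> fs" "fdiff f g \<in> NN"
  shows "cl f = cl g"
proof -
  have "fdiff h g \<in> NN \<longleftrightarrow> fdiff h f \<in> NN" for h
  proof
    assume "fdiff h g \<in> NN"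
    moreover have "fdiff h f = fdiff (fdiff h g) (fdiff f g)" by (simp add: fdiff_def)
    ultimately show "fdiff h f \<in> NN" using assms(3) by (simp add: null_diff)
  next
    assume "fdiff h f \<in> NN"
    moreover have "fdiff h g = fadd (fdiff h f) (fdiff f g)" by (simp add: fdiff_def fadd_def)
    ultimately show "fdiff h g \<in> NN" using assms(3) by (simp add: null_add)
  qed
  then show ?thesis by (auto simp: tcls_def)
qed

lemma cl_in_T: "f \<in> fs \<Longrightarrow> cl f \<in> TT"
  by (simp add: tcarrier_def)

lemma T_cases: "X \<in> TT \<Longrightarrow> \<exists>f\<in>fs. X = cl f"
  by (auto simp: tcarrier_def)

lemma rep_cl: assumes "f \<in> fs" shows "rep (cl f) \<in> fs" "fdiff (rep (cl f)) f \<in> NN"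
proof -
  have "rep (cl f) \<in> cl f" unfolding rep_def using cl_self[OF assms] by (metis someI)
  then show "rep (cl f) \<in> fs" "fdiff (rep (cl f)) f \<in> NN" by (auto simp: tcls_def)
qed

lemma cl_rep: "f \<in> fs \<Longrightarrow> cl (rep (cl f)) = cl f"
  using rep_cl cl_eq by blast

lemma tadd_cl: assumes "f \<in> fs" "g \<in> fs" shows "tadd NN (cl f) (cl g) = cl (fadd f g)"
proof -
  have "fdiff (fadd (rep (cl f)) (rep (cl g))) (fadd f g) = fadd (fdiff (rep (cl f)) f) (fdiff (rep (cl g)) g)"
    by (auto simp: fdiff_def fadd_def)
  then show ?thesis unfolding tadd_def using assms rep_cl
    by (intro cl_eq) (auto simp: null_add)
qed

lemma tsc_cl: assumes "f \<in> fs" shows "tsc NN c (cl f) = cl (fsmul c f)"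
proof -
  have "fdiff (fsmul c (rep (cl f))) (fsmul c f) = fsmul c (fdiff (rep (cl f)) f)"
    by (auto simp: fdiff_def fsmul_def right_diff_distrib)
  then show ?thesis unfolding tsc_def using assms rep_cl
    by (intro cl_eq) (auto simp: null_smul)
qed

lemma tmul_cl: assumes "f \<in> fs" "g \<in> fs" shows "tmul NN (cl f) (cl g) = cl (conv f g)"
proof -
  let ?f = "rep (cl f)" and ?g = "rep (cl g)"
  have fs: "?f \<in> fs" "?g \<in> fs" using rep_cl assms by auto
  have "fdiff (conv ?f ?g) (conv f g) = fadd (conv (fdiff ?f f) ?g) (conv f (fdiff ?g g))"
    using fs assms by (simp add: conv_fdiff_left conv_fdiff_right) (auto simp: fdiff_def fadd_def)
  moreover have "conv (fdiff ?f f) ?g \<in> NN" "conv f (fdiff ?g g) \<in> NN"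
    using rep_cl assms fs by (auto intro: null_conv_right null_conv_left)
  ultimately show ?thesis unfolding tmul_def using assms fs
    by (intro cl_eq) (auto simp: null_add)
qed

lemma push_L:
  fixes g :: "'d \<times> 'e \<Rightarrow> 'k"
  assumes "g \<in> fs"
  shows "push (\<lambda>(x, y). (d * x, y)) g = conv (dlt (d, 1)) g"
proof
  fix x
  have fin: "finite (fsupp g)" using assms by (simp add: fs_def)
  have "conv (dlt (d, 1)) g x = (\<Sum>q\<in>fsupp g. if (d * fst q, snd q) = x then g q else 0)"
    apply (subst conv_eq[of "{(d,1)}" "fsupp g"])
    using fin by (auto simp: fsupp_def dlt_def cong: if_cong)
  also have "\<dots> = push (\<lambda>(x, y). (d * x, y)) g x"
    unfolding push_def using fin by (simp add: sum.inter_filter case_prod_beta)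
  finally show "push (\<lambda>(x, y). (d * x, y)) g x = conv (dlt (d, 1)) g x" by simp
qed

lemma push_R:
  fixes g :: "'d \<times> 'e \<Rightarrow> 'k"
  assumes "g \<in> fs"
  shows "push (\<lambda>(x, y). (x, e * y)) g = conv (dlt (1, e)) g"
proof
  fix x
  have fin: "finite (fsupp g)" using assms by (simp add: fs_def)
  have "conv (dlt (1, e)) g x = (\<Sum>q\<in>fsupp g. if (fst q, e * snd q) = x then g q else 0)"
    apply (subst conv_eq[of "{(1,e)}" "fsupp g"])
    using fin by (auto simp: fsupp_def dlt_def cong: if_cong)
  also have "\<dots> = push (\<lambda>(x, y). (x, e * y)) g x"
    unfolding push_def using fin by (simp add: sum.inter_filter case_prod_beta)
  finally show "push (\<lambda>(x, y). (x, e * y)) g x = conv (dlt (1, e)) g x" by simp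
qed

lemma actL_eq: "actL NN d = lmul NN (cl (dlt (d, 1)))"
proof
  fix X show "actL NN d X = lmul NN (cl (dlt (d, 1))) X"
  proof (cases "X \<in> TT")
    case True
    then obtain g where g: "g \<in> fs" "X = cl g" using T_cases by blast
    have "actL NN d X = cl (conv (dlt (d, 1)) (rep (cl g)))"
      using True g rep_cl by (simp add: actL_def push_L)
    also have "\<dots> = tmul NN (cl (dlt (d, 1))) (cl (rep (cl g)))"
      using g rep_cl by (simp add: tmul_cl)
    also have "\<dots> = lmul NN (cl (dlt (d, 1))) X"
      using True g by (simp add: cl_rep lmul_def)
    finally show ?thesis .
  next
    case False then show ?thesis by (simp add: actL_def lmul_def)
  qed
qed

lemma actR_eq: "actR NN e = lmul NN (cl (dlt (1, e)))"
proof
  fix X show "actR NN e X = lmul NN (cl (dlt (1, e))) X"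
  proof (cases "X \<in> TT")
    case True
    then obtain g where g: "g \<in> fs" "X = cl g" using T_cases by blast
    have "actR NN e X = cl (conv (dlt (1, e)) (rep (cl g)))"
      using True g rep_cl by (simp add: actR_def push_R)
    also have "\<dots> = tmul NN (cl (dlt (1, e))) (cl (rep (cl g)))"
      using g rep_cl by (simp add: tmul_cl)
    also have "\<dots> = lmul NN (cl (dlt (1, e))) X"
      using True g by (simp add: cl_rep lmul_def)
    finally show ?thesis .
  next
    case False then show ?thesis by (simp add: actR_def lmul_def)
  qed
qed

end


context tq begin

lemma lmul_cl: "f \<in> fs \<Longrightarrow> g \<in> fs \<Longrightarrow> lmul NN (cl f) (cl g) = cl (conv f g)"
  by (simp add: lmul_def cl_in_T tmul_cl)

lemma tadd_T: "X \<in> TT \<Longrightarrow> Y \<in> TT \<Longrightarrow> tadd NN X Y \<in> TT"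
  by (auto dest!: T_cases simp: tadd_cl cl_in_T)

lemma tsc_T: "X \<in> TT \<Longrightarrow> tsc NN c X \<in> TT"
  by (auto dest!: T_cases simp: tsc_cl cl_in_T)

lemma tmul_T: "X \<in> TT \<Longrightarrow> Y \<in> TT \<Longrightarrow> tmul NN X Y \<in> TT"
  by (auto dest!: T_cases simp: tmul_cl cl_in_T)

lemma tone_eq: "tone NN = cl (dlt (1, 1))" by (simp add: tone_def)

lemma M1: "\<xi> \<in> TT \<Longrightarrow> lmul NN \<xi> \<in> lin_end NN"
proof -
  assume "\<xi> \<in> TT"
  then obtain f where f: "f \<in> fs" "\<xi> = cl f" using T_cases by blast
  have "lmul NN \<xi> \<in> TT \<rightarrow>\<^sub>E TT"
    unfolding lmul_def using \<open>\<xi> \<in> TT\<close> by (auto intro: tmul_T)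
  moreover have "lmul NN \<xi> (tadd NN X Y) = tadd NN (lmul NN \<xi> X) (lmul NN \<xi> Y)"
    if XY: "X \<in> TT" "Y \<in> TT" for X Y
  proof -
    obtain g h where gh: "g \<in> fs" "X = cl g" "h \<in> fs" "Y = cl h" using XY T_cases by meson
    show ?thesis using f gh by (simp add: tadd_cl lmul_cl conv_fadd_right)
  qed
  moreover have "lmul NN \<xi> (tsc NN c X) = tsc NN c (lmul NN \<xi> X)"
    if XY: "X \<in> TT" for X c
  proof -
    obtain g where gh: "g \<in> fs" "X = cl g" using XY T_cases by blast
    show ?thesis using f gh by (simp add: tsc_cl lmul_cl conv_fsmul_right)
  qed
  ultimately show ?thesis unfolding lin_end_def by blast
qed

lemma M2: "\<xi> \<in> TT \<Longrightarrow> \<eta> \<in> TT \<Longrightarrow>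
   lmul NN (tadd NN \<xi> \<eta>) = (\<lambda>X\<in>TT. tadd NN (lmul NN \<xi> X) (lmul NN \<eta> X))"
proof
  fix X assume "\<xi> \<in> TT" "\<eta> \<in> TT"
  then obtain f f' where f: "f \<in> fs" "\<xi> = cl f" "f' \<in> fs" "\<eta> = cl f'" using T_cases by blast
  show "lmul NN (tadd NN \<xi> \<eta>) X = (\<lambda>X\<in>TT. tadd NN (lmul NN \<xi> X) (lmul NN \<eta> X)) X"
  proof (cases "X \<in> TT")
    case True
    then obtain g where "g \<in> fs" "X = cl g" using T_cases by blast
    then show ?thesis using f by (simp add: tadd_cl lmul_cl conv_fadd_left cl_in_T)
  next
    case False then show ?thesis by (simp add: lmul_def)
  qed
qed

lemma M3: "\<xi> \<in> TT \<Longrightarrow>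
   lmul NN (tsc NN c \<xi>) = (\<lambda>X\<in>TT. tsc NN c (lmul NN \<xi> X))"
proof
  fix X assume "\<xi> \<in> TT"
  then obtain f where f: "f \<in> fs" "\<xi> = cl f" using T_cases by blast
  show "lmul NN (tsc NN c \<xi>) X = (\<lambda>X\<in>TT. tsc NN c (lmul NN \<xi> X)) X"
  proof (cases "X \<in> TT")
    case True
    then obtain g where "g \<in> fs" "X = cl g" using T_cases by blast
    then show ?thesis using f by (simp add: tsc_cl lmul_cl conv_fsmul_left cl_in_T)
  next
    case False then show ?thesis by (simp add: lmul_def)
  qed
qed

lemma M4: "\<xi> \<in> TT \<Longrightarrow> \<eta> \<in> TT \<Longrightarrow>
   lmul NN (tmul NN \<xi> \<eta>) = compose TT (lmul NN \<xi>) (lmul NN \<eta>)"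
proof
  fix X assume "\<xi> \<in> TT" "\<eta> \<in> TT"
  then obtain f f' where f: "f \<in> fs" "\<xi> = cl f" "f' \<in> fs" "\<eta> = cl f'" using T_cases by blast
  show "lmul NN (tmul NN \<xi> \<eta>) X = compose TT (lmul NN \<xi>) (lmul NN \<eta>) X"
  proof (cases "X \<in> TT")
    case True
    then obtain g where "g \<in> fs" "X = cl g" using T_cases by blast
    then show ?thesis using f by (simp add: compose_def tmul_cl lmul_cl conv_assoc cl_in_T)
  next
    case False then show ?thesis by (simp add: lmul_def compose_def)
  qed
qed

lemma M5: "lmul NN (tone NN) = (\<lambda>X\<in>TT. X)"
proof
  fix X
  show "lmul NN (tone NN) X = (\<lambda>X\<in>TT. X) X"
  proof (cases "X \<in> TT")
    case True
    then obtain g where "g \<in> fs" "X = cl g" using T_cases by blast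
    then show ?thesis by (simp add: tone_eq lmul_cl conv_unit_left cl_in_T)
  next
    case False then show ?thesis by (simp add: lmul_def)
  qed
qed

lemma M6: "inj_on (lmul NN) TT"
proof
  fix \<xi> \<eta> assume a: "\<xi> \<in> TT" "\<eta> \<in> TT" "lmul NN \<xi> = lmul NN \<eta>"
  then obtain f f' where f: "f \<in> fs" "\<xi> = cl f" "f' \<in> fs" "\<eta> = cl f'" using T_cases by blast
  have "lmul NN \<xi> (tone NN) = lmul NN \<eta> (tone NN)" using a by simp
  then show "\<xi> = \<eta>" using f by (simp add: tone_eq lmul_cl conv_unit_right)
qed

end


context tq begin

lemma gens: "actL NN ` {d. \<forall>b. d * aB b = aB b * d} \<union> actR NN ` {e. \<forall>b. bB b * e = e * bB b}
   = range (actL NN) \<union> range (actR NN)"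
proof -
  have "{d. \<forall>b. d * aB b = aB b * d} = UNIV" "{e. \<forall>b. bB b * e = e * bB b} = UNIV"
    using cAc cBc by auto
  then show ?thesis by simp
qed

lemma dlt_split: "(dlt (a1, a2) :: 'd \<times> 'e \<Rightarrow> 'k) = conv (dlt (a1, 1)) (dlt (1, a2))"
  by (simp add: conv_dlt_dlt)

lemma fus1: "f \<in> fs \<Longrightarrow> lmul NN (cl f) \<in> gen_subalg NN (range (actL NN) \<union> range (actR NN))"
proof (induction rule: fs_induct)
  case zero
  have "lmul NN (cl (\<lambda>_. 0)) = (\<lambda>X\<in>TT. tsc NN 0 ((\<lambda>X\<in>TT. X) X))"
  proof
    fix X show "lmul NN (cl (\<lambda>_. 0)) X = (\<lambda>X\<in>TT. tsc NN 0 ((\<lambda>X\<in>TT. X) X)) X"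
    proof (cases "X \<in> TT")
      case True
      then obtain g where g: "g \<in> fs" "X = cl g" using T_cases by blast
      have "fsmul 0 g = (\<lambda>_. 0)" by (simp add: fsmul_def)
      then show ?thesis using g True by (simp add: lmul_cl tsc_cl conv_zero_left)
    next
      case False then show ?thesis by (simp add: lmul_def)
    qed
  qed
  then show ?case by (simp only:) (rule gen_subalg.scale, rule gen_subalg.one)
next
  case (step f a c)
  obtain a1 a2 where a: "a = (a1, a2)" by force
  have d: "dlt a \<in> fs" by simp
  have "tmul NN (cl (dlt (a1, 1))) (cl (dlt (1, a2))) = cl (dlt a)"
    using a by (simp add: tmul_cl conv_dlt_dlt)
  then have "lmul NN (cl (dlt a)) = compose TT (lmul NN (cl (dlt (a1, 1)))) (lmul NN (cl (dlt (1, a2))))"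
    using M4[of "cl (dlt (a1, 1))" "cl (dlt (1, a2))"] by (simp add: cl_in_T)
  then have "lmul NN (cl (dlt a)) = compose TT (actL NN a1) (actR NN a2)"
    by (simp only: actL_eq actR_eq)
  then have "lmul NN (cl (dlt a)) \<in> gen_subalg NN (range (actL NN) \<union> range (actR NN))"
    by (simp add: gen_subalg.mult gen_subalg.base)
  then have s: "lmul NN (cl (fsmul c (dlt a))) \<in> gen_subalg NN (range (actL NN) \<union> range (actR NN))"
    using M3[of "cl (dlt a)" c] by (simp add: tsc_cl cl_in_T gen_subalg.scale)
  have eq: "lmul NN (cl (fadd f (fsmul c (dlt a)))) =
     (\<lambda>X\<in>TT. tadd NN (lmul NN (cl f) X) (lmul NN (cl (fsmul c (dlt a))) X))"
    using M2[of "cl f" "cl (fsmul c (dlt a))"] step by (simp add: tadd_cl cl_in_T)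
  show ?case unfolding eq by (rule gen_subalg.add[OF step.IH s])
qed

lemma fus2: "\<phi> \<in> gen_subalg NN S \<Longrightarrow> S = range (actL NN) \<union> range (actR NN) \<Longrightarrow> \<phi> \<in> lmul NN ` TT"
proof (induction rule: gen_subalg.induct)
  case (base \<phi>)
  then consider d where "\<phi> = actL NN d" | e where "\<phi> = actR NN e" by blast
  then show ?case
  proof cases
    case 1 then show ?thesis unfolding actL_eq by (rule image_eqI) (simp add: cl_in_T)
  next
    case 2 then show ?thesis unfolding actR_eq by (rule image_eqI) (simp add: cl_in_T)
  qed
next
  case one
  show ?case
  proof (rule image_eqI)
    show "(\<lambda>X\<in>TT. X) = lmul NN (tone NN)" using M5 by simp
    show "tone NN \<in> TT" by (simp add: tone_eq cl_in_T)
  qed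
next
  case (add \<phi> \<psi>)
  then obtain \<xi> \<eta> where h: "\<xi> \<in> TT" "\<eta> \<in> TT" "\<phi> = lmul NN \<xi>" "\<psi> = lmul NN \<eta>" by blast
  show ?case unfolding h(3,4) proof (rule image_eqI)
    show "(\<lambda>X\<in>TT. tadd NN (lmul NN \<xi> X) (lmul NN \<eta> X)) = lmul NN (tadd NN \<xi> \<eta>)" using h by (simp add: M2)
    show "tadd NN \<xi> \<eta> \<in> TT" using h by (simp add: tadd_T)
  qed
next
  case (scale \<phi> c)
  then obtain \<xi> where h: "\<xi> \<in> TT" "\<phi> = lmul NN \<xi>" by blast
  show ?case unfolding h(2) proof (rule image_eqI)
    show "(\<lambda>X\<in>TT. tsc NN c (lmul NN \<xi> X)) = lmul NN (tsc NN c \<xi>)" using h by (simp add: M3)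
    show "tsc NN c \<xi> \<in> TT" using h by (simp add: tsc_T)
  qed
next
  case (mult \<phi> \<psi>)
  then obtain \<xi> \<eta> where h: "\<xi> \<in> TT" "\<eta> \<in> TT" "\<phi> = lmul NN \<xi>" "\<psi> = lmul NN \<eta>" by blast
  show ?case unfolding h(3,4) proof (rule image_eqI)
    show "compose TT (lmul NN \<xi>) (lmul NN \<eta>) = lmul NN (tmul NN \<xi> \<eta>)" using h by (simp add: M4)
    show "tmul NN \<xi> \<eta> \<in> TT" using h by (simp add: tmul_T)
  qed
qed

lemma M7: "lmul NN ` TT = fusion sD sE aB bB"
proof -
  have "fusion sD sE aB bB = gen_subalg NN (range (actL NN) \<union> range (actR NN))"
    by (simp add: fusion_def gens Let_def)
  moreover have "lmul NN ` TT \<subseteq> gen_subalg NN (range (actL NN) \<union> range (actR NN))"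
    using fus1 T_cases by blast
  moreover have "gen_subalg NN (range (actL NN) \<union> range (actR NN)) \<subseteq> lmul NN ` TT"
    using fus2 by blast
  ultimately show ?thesis by blast
qed

end

theorem mainTheorem3:
  fixes sA :: "'k::field \<Rightarrow> 'a::comm_ring_1 \<Rightarrow> 'a"
    and sB :: "'k \<Rightarrow> 'b::comm_ring_1 \<Rightarrow> 'b"
    and sC :: "'k \<Rightarrow> 'c::comm_ring_1 \<Rightarrow> 'c"
    and sD :: "'k \<Rightarrow> 'd::ring_1 \<Rightarrow> 'd"
    and sE :: "'k \<Rightarrow> 'e::ring_1 \<Rightarrow> 'e"
    and \<alpha>A :: "'a \<Rightarrow> 'd" and \<alpha>B :: "'b \<Rightarrow> 'd"
    and \<beta>B :: "'b \<Rightarrow> 'e" and \<beta>C :: "'c \<Rightarrow> 'e"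
  assumes "kalg sA" "kalg sB" "kalg sC" "kalg sD" "kalg sE"
    and "alg_hom sA sD \<alpha>A" "range \<alpha>A \<subseteq> center"
    and "alg_hom sB sD \<alpha>B" "range \<alpha>B \<subseteq> center"
    and "alg_hom sB sE \<beta>B" "range \<beta>B \<subseteq> center"
    and "alg_hom sC sE \<beta>C" "range \<beta>C \<subseteq> center"
  shows "let N = tens_null sD sE \<alpha>B \<beta>B; T = tcarrier N in
     (\<forall>\<xi>\<in>T. lmul N \<xi> \<in> lin_end N) \<and>
     (\<forall>\<xi>\<in>T. \<forall>\<eta>\<in>T. lmul N (tadd N \<xi> \<eta>) = (\<lambda>X\<in>T. tadd N (lmul N \<xi> X) (lmul N \<eta> X))) \<and>
     (\<forall>c. \<forall>\<xi>\<in>T. lmul N (tsc N c \<xi>) = (\<lambda>X\<in>T. tsc N c (lmul N \<xi> X))) \<and>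
     (\<forall>\<xi>\<in>T. \<forall>\<eta>\<in>T. lmul N (tmul N \<xi> \<eta>) = compose T (lmul N \<xi>) (lmul N \<eta>)) \<and>
     lmul N (tone N) = (\<lambda>X\<in>T. X) \<and>
     inj_on (lmul N) T \<and>
     lmul N ` T = fusion sD sE \<alpha>B \<beta>B"
proof -
  interpret tq sD sE \<alpha>B \<beta>B using assms by (simp add: tq_def)
  show ?thesis using M1 M2 M3 M4 M5 M6 M7 by (simp add: Let_def)
qed

end
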